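(* For every integer $N\ge1$, $D^{\mathcal{PARITY}}({\rm MAJORITY})=D^{\rm XOR}({\rm MAJORITY})=N+1-w(N)$, where ${\rm MAJORITY}$ is on $N$-bit inputs.
   Context: For $X=X_0X_1\cdots X_{N-1}\in\{0,1\}^N$, ${\rm MAJORITY}(X)=0$ if $X$ contains more zeros than ones and ${\rm MAJORITY}(X)=1$ otherwise. $w(N)$ denotes the number of ones in the binary representation of $N$. A $\mathcal{PARITY}$-decision tree on $N$-bit inputs is a deterministic adaptive algorithm that on input $X$ makes a sequence of queries, each being the parity $\bigoplus_{i\in T}X_i$ for some nonempty $T\subseteq\{0,\dots,N-1\}$, each chosen depending on previous answers, and then outputs a value; an XOR decision tree is the same but each query must be either a single bit $X_i$ or $X_i\oplus X_j$ for some $i,j$. The cost is the maximum over inputs of the number of queries. $D^{\mathcal{PARITY}}(f)$ (resp. $D^{\rm XOR}(f)$) is the minimum cost of a $\mathcal{PARITY}$-decision tree (resp. XOR decision tree) that outputs $f(X)$ on every input $X$. *)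

theory Defs
  imports Main
begin

text \<open>Inputs X = X_0 ... X_{N-1} are bool lists of length N (True = 1).\<close>

datatype dtree = Leaf bool | Query "nat set" dtree dtree

definition parity :: "nat set \<Rightarrow> bool list \<Rightarrow> bool" where
  "parity T X = odd (card {i \<in> T. X ! i})"

fun eval_tree :: "dtree \<Rightarrow> bool list \<Rightarrow> bool" where
  "eval_tree (Leaf b) X = b"
| "eval_tree (Query T t0 t1) X = (if parity T X then eval_tree t1 X else eval_tree t0 X)"

fun num_queries :: "dtree \<Rightarrow> bool list \<Rightarrow> nat" where
  "num_queries (Leaf b) X = 0"
| "num_queries (Query T t0 t1) X = Suc (if parity T X then num_queries t1 X else num_queries t0 X)"

fun tree_queries_ok :: "(nat set \<Rightarrow> bool) \<Rightarrow> dtree \<Rightarrow> bool" where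
  "tree_queries_ok Q (Leaf b) = True"
| "tree_queries_ok Q (Query T t0 t1) = (Q T \<and> tree_queries_ok Q t0 \<and> tree_queries_ok Q t1)"

definition parity_query :: "nat \<Rightarrow> nat set \<Rightarrow> bool" where
  "parity_query N T = (T \<noteq> {} \<and> T \<subseteq> {..<N})"

definition xor_query :: "nat \<Rightarrow> nat set \<Rightarrow> bool" where
  "xor_query N T = ((\<exists>i<N. T = {i}) \<or> (\<exists>i<N. \<exists>j<N. i \<noteq> j \<and> T = {i, j}))"

definition tree_cost :: "nat \<Rightarrow> dtree \<Rightarrow> nat" where
  "tree_cost N t = Max ((num_queries t) ` {X. length X = N})"

definition computes :: "nat \<Rightarrow> dtree \<Rightarrow> (bool list \<Rightarrow> bool) \<Rightarrow> bool" where
  "computes N t f = (\<forall>X. length X = N \<longrightarrow> eval_tree t X = f X)"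

definition D :: "(nat \<Rightarrow> nat set \<Rightarrow> bool) \<Rightarrow> nat \<Rightarrow> (bool list \<Rightarrow> bool) \<Rightarrow> nat" where
  "D Q N f = (LEAST c. \<exists>t. tree_queries_ok (Q N) t \<and> computes N t f \<and> tree_cost N t = c)"

definition D_PARITY :: "nat \<Rightarrow> (bool list \<Rightarrow> bool) \<Rightarrow> nat" where
  "D_PARITY = D parity_query"

definition D_XOR :: "nat \<Rightarrow> (bool list \<Rightarrow> bool) \<Rightarrow> nat" where
  "D_XOR = D xor_query"

definition MAJORITY :: "bool list \<Rightarrow> bool" where
  "MAJORITY X = (\<not> (count_list X False > count_list X True))"

fun w :: "nat \<Rightarrow> nat" where
  "w n = (if n = 0 then 0 else n mod 2 + w (n div 2))"

declare w.simps[simp del]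

end

theory Submission
  imports Defs "HOL-Computational_Algebra.Primes"
begin


lemma w0[simp]: "w 0 = 0" by (subst w.simps) simp
lemma w_even[simp]: "w (2*n) = w n"
proof (cases "n = 0")
  case True then show ?thesis by simp
next
  case False
  have "w (2*n) = (2*n) mod 2 + w ((2*n) div 2)" using False by (subst w.simps) simp
  then show ?thesis by simp
qed
lemma w_odd'[simp]: "w (Suc (2*n)) = Suc (w n)"
proof -
  have "w (Suc (2*n)) = (Suc (2*n)) mod 2 + w ((Suc (2*n)) div 2)" by (subst w.simps) simp
  then show ?thesis by simp
qed
lemma w_odd: "w (2*n+1) = w n + 1"
  by simp
lemma w_Suc_le: "w (Suc n) \<le> w n + 1"
proof (induction n rule: nat_less_induct)
  case (1 n)
  show ?case
  proof (cases "even n")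
    case True then obtain k where "n = 2*k" by blast
    then show ?thesis by simp
  next
    case False then obtain k where k: "n = 2*k+1" using oddE by blast
    have "Suc n = 2*(Suc k)" using k by simp
    then have "w (Suc n) = w (Suc k)" by (metis w_even)
    also have "\<dots> \<le> w k + 1" using 1 k by simp
    finally show ?thesis using k by simp
  qed
qed
lemma w_add2: "w (n+2) \<le> w n + 1"
proof (cases "even n")
  case True then obtain k where k: "n = 2*k" by blast
  have "n+2 = 2*Suc k" using k by simp
  then have "w (n+2) = w (Suc k)" by (simp only: w_even)
  then show ?thesis using w_Suc_le[of k] k by simp
next
  case False then obtain k where k: "n = 2*k+1" using oddE by blast
  have "n+2 = Suc (2*Suc k)" using k by simp
  then have "w (n+2) = Suc (w (Suc k))" by (simp only: w_odd')
  then show ?thesis using w_Suc_le[of k] k by simp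
qed

function alg :: "nat list \<Rightarrow> nat list \<Rightarrow> nat option \<Rightarrow> dtree" where
  "alg (r1#r2#rest) acc lo = Query {r1,r2} (alg rest (r1#acc) lo) (alg rest acc lo)"
| "alg [r] acc lo = alg acc [] (Some r)"
| "alg [] (a#acc) lo = alg (a#acc) [] lo"
| "alg [] [] lo = (case lo of None \<Rightarrow> Leaf True | Some r \<Rightarrow> Query {r} (Leaf False) (Leaf True))"
  by pat_completeness auto
termination
  by (relation "measures [\<lambda>(L,acc,lo). length L + length acc, \<lambda>(L,acc,lo). length acc]") auto

lemma alg_cost: "num_queries (alg L acc lo) X + w (length L + 2*length acc) \<le> length L + length acc + 1"
proof (induction L acc lo rule: alg.induct)
  case (1 r1 r2 rest acc lo)
  have a: "w (length rest + 2 * length acc + 2) \<le> w (length rest + 2 * length acc) + 1"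
    using w_add2 by blast
  show ?case using 1 a by (auto simp: algebra_simps)
next
  case (2 r acc lo)
  then show ?case using w_odd[of "length acc"] by (simp add: add.commute)
next
  case (3 a acc lo)
  then show ?case using w_even[of "Suc (length acc)"] by simp
qed (auto split: option.splits)

lemma alg_ok: "distinct (L @ acc) \<Longrightarrow> set L \<subseteq> {..<N} \<Longrightarrow> set acc \<subseteq> {..<N} \<Longrightarrow> set_option lo \<subseteq> {..<N}
  \<Longrightarrow> tree_queries_ok (xor_query N) (alg L acc lo)"
  by (induction L acc lo rule: alg.induct) (auto simp: xor_query_def split: option.splits)

definition sg :: "bool \<Rightarrow> int" where "sg b = (if b then 1 else -1)"

lemma parity_single: "parity {r} X = X!r"
  by (simp add: parity_def Collect_conv_if)
lemma parity_pair: "r1 \<noteq> r2 \<Longrightarrow> parity {r1,r2} X = (X!r1 \<noteq> X!r2)"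
proof -
  assume "r1 \<noteq> r2"
  have "{i \<in> {r1,r2}. X!i} = (if X!r1 then {r1} else {}) \<union> (if X!r2 then {r2} else {})" by auto
  then show ?thesis using \<open>r1 \<noteq> r2\<close> by (simp add: parity_def)
qed

lemma alg_correct:
  "distinct (L @ acc) \<Longrightarrow> s > 0 \<Longrightarrow> \<bar>R\<bar> < s \<Longrightarrow>
   (case lo of None \<Rightarrow> R = 0 | Some r \<Rightarrow> R \<noteq> 0 \<and> (R \<ge> 0 \<longleftrightarrow> X!r)) \<Longrightarrow>
   eval_tree (alg L acc lo) X = (0 \<le> s * sum_list (map (\<lambda>r. sg (X!r)) L) + 2*s*sum_list (map (\<lambda>r. sg (X!r)) acc) + R)"
proof (induction L acc lo arbitrary: s R rule: alg.induct)
  case (1 r1 r2 rest acc lo)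
  have ne: "r1 \<noteq> r2" using "1.prems" by auto
  show ?case
  proof (cases "X!r1 = X!r2")
    case True
    have "eval_tree (alg (r1 # r2 # rest) acc lo) X = eval_tree (alg rest (r1#acc) lo) X"
      using True ne by (simp add: parity_pair)
    also have "\<dots> = (0 \<le> s * sum_list (map (\<lambda>r. sg (X!r)) rest) + 2*s*sum_list (map (\<lambda>r. sg (X!r)) (r1#acc)) + R)"
      using "1.IH"(1)[of s R] "1.prems" by auto
    finally show ?thesis using True by (simp add: algebra_simps)
  next
    case False
    have "eval_tree (alg (r1 # r2 # rest) acc lo) X = eval_tree (alg rest acc lo) X"
      using False ne by (simp add: parity_pair)
    also have "\<dots> = (0 \<le> s * sum_list (map (\<lambda>r. sg (X!r)) rest) + 2*s*sum_list (map (\<lambda>r. sg (X!r)) acc) + R)"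
      using "1.IH"(2)[of s R] "1.prems" by auto
    finally show ?thesis using False by (simp add: algebra_simps sg_def)
  qed
next
  case (2 r acc lo)
  have "eval_tree (alg [r] acc lo) X = eval_tree (alg acc [] (Some r)) X" by simp
  also have "\<dots> = (0 \<le> (2*s) * sum_list (map (\<lambda>r. sg (X!r)) acc) + 2*(2*s)*sum_list (map (\<lambda>r. sg (X!r)) []) + (s * sg (X!r) + R))"
    using "2.prems" by (intro "2.IH") (auto simp: sg_def abs_if split: if_splits)
  finally show ?case by (simp add: algebra_simps)
next
  case (3 a acc lo)
  have "eval_tree (alg [] (a#acc) lo) X = eval_tree (alg (a#acc) [] lo) X" by simp
  also have "\<dots> = (0 \<le> (2*s) * sum_list (map (\<lambda>r. sg (X!r)) (a#acc)) + 2*(2*s)*sum_list (map (\<lambda>r. sg (X!r)) []) + R)"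
    using "3.prems" by (intro "3.IH") auto
  finally show ?case by (simp add: algebra_simps)
next
  case (4 lo)
  then show ?case by (auto simp: parity_single split: option.splits)
qed



definition chi :: "nat set \<Rightarrow> bool list \<Rightarrow> int" where
  "chi U x = (-1) ^ card {i\<in>U. x!i}"

definition region :: "nat \<Rightarrow> (nat set \<times> bool) list \<Rightarrow> bool list set" where
  "region N C = {x. length x = N \<and> (\<forall>(T,b)\<in>set C. parity T x = b)}"

lemma finite_len: "finite {x::bool list. length x = N}"
  using finite_lists_length_eq[of "UNIV::bool set" N] by simp

lemma card_len: "card {x::bool list. length x = N} = 2^N"
  using card_lists_length_eq[of "UNIV::bool set" N] by simp

lemma finite_region: "finite (region N C)"
  by (rule finite_subset[OF _ finite_len[of N]]) (auto simp: region_def)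

lemma chi_flip:
  assumes "i \<in> U" "i < length x" "finite U"
  shows "chi U (x[i := \<not> x!i]) = - chi U x"
proof -
  let ?A = "{j\<in>U. x!j}"
  have finA: "finite ?A" using assms by simp
  show ?thesis
  proof (cases "x!i")
    case True
    have e: "{j\<in>U. x[i := \<not> x!i]!j} = ?A - {i}" using assms True by (auto simp: nth_list_update)
    have "card ?A = Suc (card (?A - {i}))" using finA True assms
      by (metis (mono_tags, lifting) card_Suc_Diff1 mem_Collect_eq)
    then show ?thesis unfolding chi_def e by simp
  next
    case False
    have e: "{j\<in>U. x[i := \<not> x!i]!j} = insert i ?A" using assms False by (auto simp: nth_list_update)
    have "card (insert i ?A) = Suc (card ?A)" using finA False by simp
    then show ?thesis unfolding chi_def e by simp
  qed
qed

lemma base_dvd: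
  assumes "U \<subseteq> {..<N}"
  shows "(2::int)^N dvd (\<Sum>x\<in>{x. length x = N}. chi U x)"
proof (cases "U = {}")
  case True
  then have "(\<Sum>x\<in>{x::bool list. length x = N}. chi U x) = of_nat (card {x::bool list. length x = N})"
    by (simp add: chi_def)
  then show ?thesis by (simp add: card_len)
next
  case False
  then obtain i where i: "i \<in> U" by blast
  have iN: "i < N" using i assms by auto
  have finU: "finite U" using assms finite_subset by blast
  let ?S = "{x::bool list. length x = N}"
  let ?f = "\<lambda>x::bool list. x[i := \<not> x!i]"
  have ff: "\<And>x. x \<in> ?S \<Longrightarrow> ?f (?f x) = x" using iN by (simp add: list_update_overwrite)
  have inj: "inj_on ?f ?S"
  proof (rule inj_onI)
    fix x y assume xy: "x \<in> ?S" "y \<in> ?S" "?f x = ?f y"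
    have "x = ?f (?f x)" using ff xy(1) by simp
    also have "\<dots> = ?f (?f y)" using xy(3) by simp
    also have "\<dots> = y" using ff xy(2) by simp
    finally show "x = y" .
  qed
  have img: "?f ` ?S = ?S"
  proof
    show "?f ` ?S \<subseteq> ?S" by auto
    show "?S \<subseteq> ?f ` ?S"
    proof
      fix x assume "x \<in> ?S"
      then have "?f (?f x) = x" "?f x \<in> ?S" using ff by auto
      then show "x \<in> ?f ` ?S" by (intro rev_image_eqI[of "?f x"]) auto
    qed
  qed
  have "(\<Sum>x\<in>?S. chi U x) = (\<Sum>x\<in>?f ` ?S. chi U x)" using img by simp
  also have "\<dots> = (\<Sum>x\<in>?S. chi U (?f x))" using sum.reindex[OF inj] by simp
  also have "\<dots> = (\<Sum>x\<in>?S. - chi U x)" using chi_flip[OF i _ finU] iN by (intro sum.cong) auto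
  also have "\<dots> = - (\<Sum>x\<in>?S. chi U x)" by (simp add: sum_negf)
  finally have "(\<Sum>x\<in>?S. chi U x) = 0" by simp
  then show ?thesis by simp
qed

lemma chi_mult:
  assumes "finite U" "finite T"
  shows "chi U x * chi T x = chi ((U - T) \<union> (T - U)) x"
proof -
  let ?A = "{i\<in>U. x!i}" and ?B = "{i\<in>T. x!i}"
  have fA: "finite ?A" and fB: "finite ?B" using assms by auto
  have e: "{i\<in>(U - T) \<union> (T - U). x!i} = (?A - ?B) \<union> (?B - ?A)" by auto
  have c1: "card ?A + card ?B = card (?A \<union> ?B) + card (?A \<inter> ?B)" using card_Un_Int[OF fA fB] .
  have u: "?A \<union> ?B = ((?A - ?B) \<union> (?B - ?A)) \<union> (?A \<inter> ?B)" by auto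
  have c2: "card (?A \<union> ?B) = card ((?A - ?B) \<union> (?B - ?A)) + card (?A \<inter> ?B)"
    unfolding u by (rule card_Un_disjoint) (use fA fB in auto)
  have c3: "card ?A + card ?B = card ((?A - ?B) \<union> (?B - ?A)) + 2 * card (?A \<inter> ?B)" using c1 c2 by linarith
  have "chi U x * chi T x = (-1::int) ^ (card ?A + card ?B)" by (simp add: chi_def power_add)
  also have "\<dots> = (-1) ^ (card ((?A - ?B) \<union> (?B - ?A)) + 2 * card (?A \<inter> ?B))" by (simp only: c3)
  also have "\<dots> = (-1) ^ (card ((?A - ?B) \<union> (?B - ?A)))" by (simp only: power_add power_mult) simp
  also have "\<dots> = chi ((U - T) \<union> (T - U)) x" unfolding chi_def e ..
  finally show ?thesis .
qed

lemma chi_parity: "chi T x = (if parity T x then -1 else 1)"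
  by (simp add: chi_def parity_def)

lemma step_sum:
  assumes "finite R" "finite U" "finite T"
  shows "2 * (\<Sum>x\<in>{x\<in>R. parity T x = b}. chi U x)
       = (\<Sum>x\<in>R. chi U x) + (if b then -1 else 1) * (\<Sum>x\<in>R. chi ((U - T) \<union> (T - U)) x)"
proof -
  have "2 * (\<Sum>x\<in>{x\<in>R. parity T x = b}. chi U x) = (\<Sum>x\<in>R. 2 * (if parity T x = b then chi U x else 0))"
    using assms by (simp add: sum.inter_filter sum_distrib_left)
  also have "\<dots> = (\<Sum>x\<in>R. chi U x + (if b then -1 else 1) * chi ((U - T) \<union> (T - U)) x)"
  proof (intro sum.cong refl)
    fix x
    have "2 * (if parity T x = b then chi U x else 0) = chi U x + (if b then -1 else 1) * (chi U x * chi T x)"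
      by (simp add: chi_parity[of T x])
    then show "2 * (if parity T x = b then chi U x else 0) = chi U x + (if b then -1 else 1) * chi ((U - T) \<union> (T - U)) x"
      by (simp only: chi_mult[OF assms(2,3)])
  qed
  also have "\<dots> = (\<Sum>x\<in>R. chi U x) + (if b then -1 else 1) * (\<Sum>x\<in>R. chi ((U - T) \<union> (T - U)) x)"
    by (simp add: sum.distrib sum_distrib_left)
  finally show ?thesis .
qed

lemma region_dvd:
  "(\<forall>(T,b)\<in>set C. T \<subseteq> {..<N}) \<Longrightarrow> U \<subseteq> {..<N} \<Longrightarrow>
   (2::int)^(N - length C) dvd (\<Sum>x\<in>region N C. chi U x)"
proof (induction C arbitrary: U)
  case Nil
  then show ?case using base_dvd[of U N] by (simp add: region_def)
next
  case (Cons p C)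
  obtain T b where p: "p = (T,b)" by fastforce
  have TN: "T \<subseteq> {..<N}" using Cons.prems p by auto
  have finU: "finite U" using Cons.prems finite_subset by blast
  have finT: "finite T" using TN finite_subset by blast
  have UT: "(U - T) \<union> (T - U) \<subseteq> {..<N}" using TN Cons.prems by auto
  have reg: "region N (p#C) = {x\<in>region N C. parity T x = b}" by (auto simp: region_def p)
  have d1: "(2::int)^(N - length C) dvd (\<Sum>x\<in>region N C. chi U x)" using Cons by auto
  have d2: "(2::int)^(N - length C) dvd (\<Sum>x\<in>region N C. chi ((U - T) \<union> (T - U)) x)"
    using Cons.IH[OF _ UT] Cons.prems by auto
  have eq: "2 * (\<Sum>x\<in>region N (p#C). chi U x) = (\<Sum>x\<in>region N C. chi U x) + (if b then -1 else 1) * (\<Sum>x\<in>region N C. chi ((U - T) \<union> (T - U)) x)"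
    unfolding reg by (rule step_sum[OF finite_region finU finT])
  have d3: "(2::int)^(N - length C) dvd 2 * (\<Sum>x\<in>region N (p#C). chi U x)"
    unfolding eq using d1 d2 by simp
  show ?case
  proof (cases "N - length C = 0")
    case True then show ?thesis by simp
  next
    case False
    then have "N - length C = Suc (N - length (p#C))" by simp
    then show ?thesis using d3 by simp
  qed
qed

lemma tree_dvd:
  "tree_queries_ok (parity_query N) t \<Longrightarrow> (\<forall>(T,b)\<in>set C. T \<subseteq> {..<N}) \<Longrightarrow> U \<subseteq> {..<N} \<Longrightarrow>
   (\<forall>x\<in>region N C. length C + num_queries t x \<le> d) \<Longrightarrow>
   (2::int)^(N - d) dvd (\<Sum>x\<in>{x\<in>region N C. \<not> eval_tree t x}. chi U x)"
proof (induction t arbitrary: C)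
  case (Leaf b)
  show ?case
  proof (cases "b \<or> region N C = {}")
    case True then show ?thesis by auto
  next
    case False
    then obtain x0 where "x0 \<in> region N C" by blast
    then have "length C \<le> d" using Leaf.prems by fastforce
    then have "(2::int)^(N - d) dvd 2^(N - length C)" by (simp add: le_imp_power_dvd)
    also have "\<dots> dvd (\<Sum>x\<in>region N C. chi U x)" using region_dvd Leaf.prems by blast
    finally show ?thesis using False by simp
  qed
next
  case (Query T t0 t1)
  have TN: "T \<subseteq> {..<N}" using Query.prems by (simp add: parity_query_def)
  let ?C1 = "(T,True)#C" and ?C0 = "(T,False)#C"
  have e: "{x\<in>region N C. \<not> eval_tree (Query T t0 t1) x} =
     {x\<in>region N ?C1. \<not> eval_tree t1 x} \<union> {x\<in>region N ?C0. \<not> eval_tree t0 x}"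
    by (auto simp: region_def)
  have dis: "{x\<in>region N ?C1. \<not> eval_tree t1 x} \<inter> {x\<in>region N ?C0. \<not> eval_tree t0 x} = {}"
    by (auto simp: region_def)
  have f1: "finite {x\<in>region N ?C1. \<not> eval_tree t1 x}" using finite_region by simp
  have f0: "finite {x\<in>region N ?C0. \<not> eval_tree t0 x}" using finite_region by simp
  have h1: "(2::int)^(N - d) dvd (\<Sum>x\<in>{x\<in>region N ?C1. \<not> eval_tree t1 x}. chi U x)"
  proof (rule Query.IH(2))
    show "\<forall>x\<in>region N ?C1. length ?C1 + num_queries t1 x \<le> d"
    proof
      fix x assume "x \<in> region N ?C1"
      then have "x \<in> region N C" "parity T x" by (auto simp: region_def)
      then show "length ?C1 + num_queries t1 x \<le> d" using Query.prems(4) by fastforce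
    qed
  qed (use Query.prems TN in auto)
  have h0: "(2::int)^(N - d) dvd (\<Sum>x\<in>{x\<in>region N ?C0. \<not> eval_tree t0 x}. chi U x)"
  proof (rule Query.IH(1))
    show "\<forall>x\<in>region N ?C0. length ?C0 + num_queries t0 x \<le> d"
    proof
      fix x assume "x \<in> region N ?C0"
      then have "x \<in> region N C" "\<not> parity T x" by (auto simp: region_def)
      then show "length ?C0 + num_queries t0 x \<le> d" using Query.prems(4) by fastforce
    qed
  qed (use Query.prems TN in auto)
  show ?case unfolding e sum.union_disjoint[OF f1 f0 dis] using h0 h1 by simp
qed



definition G :: "nat \<Rightarrow> nat \<Rightarrow> int" where
  "G n k = (\<Sum>x\<in>{x::bool list. length x = n \<and> count_list x True < k}. (-1)^count_list x True)"

lemma G_rec: "G (Suc n) (Suc k) = G n (Suc k) - G n k"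
proof -
  let ?S1 = "{x::bool list. length x = n \<and> count_list x True < Suc k}"
  let ?S0 = "{x::bool list. length x = n \<and> count_list x True < k}"
  have e: "{x::bool list. length x = Suc n \<and> count_list x True < Suc k} = Cons False ` ?S1 \<union> Cons True ` ?S0"
  proof
    show "{x::bool list. length x = Suc n \<and> count_list x True < Suc k} \<subseteq> Cons False ` ?S1 \<union> Cons True ` ?S0"
    proof
      fix x assume "x \<in> {x::bool list. length x = Suc n \<and> count_list x True < Suc k}"
      then obtain a y where x: "x = a # y" "length y = n" "count_list x True < Suc k" by (auto simp: length_Suc_conv)
      then show "x \<in> Cons False ` ?S1 \<union> Cons True ` ?S0" by (cases a) auto
    qed
  qed auto
  have f1: "finite ?S1" by (rule finite_subset[OF _ finite_len[of n]]) auto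
  have f0: "finite ?S0" by (rule finite_subset[OF _ finite_len[of n]]) auto
  have "G (Suc n) (Suc k) = (\<Sum>x\<in>Cons False ` ?S1. (-1::int)^count_list x True) + (\<Sum>x\<in>Cons True ` ?S0. (-1::int)^count_list x True)"
    unfolding G_def e by (rule sum.union_disjoint) (use f1 f0 in auto)
  also have "\<dots> = (\<Sum>x\<in>?S1. (-1::int)^count_list x True) + (\<Sum>x\<in>?S0. - ((-1::int)^count_list x True))"
    by (simp add: sum.reindex)
  also have "\<dots> = G n (Suc k) - G n k" by (simp add: G_def sum_negf)
  finally show ?thesis .
qed

lemma G_0k: "G 0 k = (if 0 < k then 1 else 0)"
proof -
  have "{x::bool list. length x = 0 \<and> count_list x True < k} = (if 0 < k then {[]} else {})" by auto
  then show ?thesis by (simp add: G_def)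
qed

lemma G_n0: "G n 0 = 0" by (simp add: G_def)

lemma G_closed: "G (Suc n) (Suc j) = (-1)^j * int (n choose j)"
proof (induction n arbitrary: j)
  case 0
  show ?case by (cases j) (simp_all add: G_rec G_0k)
next
  case (Suc n)
  show ?case
  proof (cases j)
    case 0
    have "G (Suc (Suc n)) (Suc 0) = G (Suc n) (Suc 0) - G (Suc n) 0" by (rule G_rec)
    then show ?thesis using Suc.IH[of 0] 0 by (simp add: G_n0)
  next
    case (Suc j')
    have "G (Suc (Suc n)) (Suc j) = G (Suc n) (Suc j) - G (Suc n) (Suc j')" using Suc by (simp add: G_rec)
    also have "\<dots> = (-1)^j * int (n choose j) - (-1)^j' * int (n choose j')" using Suc.IH by simp
    also have "\<dots> = (-1)^j * int (Suc n choose j)" using Suc by (simp add: algebra_simps)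
    finally show ?thesis .
  qed
qed

lemma mult2_mult: "(a::nat) \<noteq> 0 \<Longrightarrow> b \<noteq> 0 \<Longrightarrow> multiplicity 2 (a * b) = multiplicity 2 a + multiplicity 2 b"
  by (rule prime_elem_multiplicity_mult_distrib) auto

lemma mult2_odd: "multiplicity 2 (Suc (2 * (m::nat))) = 0"
  by (rule not_dvd_imp_multiplicity_0) presburger

lemma mW: "w (Suc m) + multiplicity 2 (Suc m) = w m + 1"
proof (induction m rule: nat_less_induct)
  case (1 m)
  show ?case
  proof (cases "even m")
    case True then obtain k where k: "m = 2*k" by blast
    then show ?thesis using mult2_odd[of k] by simp
  next
    case False then obtain k where k: "m = Suc (2*k)" using oddE by fastforce
    have e: "Suc m = 2 * Suc k" using k by simp
    have "multiplicity 2 (Suc m) = Suc (multiplicity 2 (Suc k))" unfolding e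
      by (rule multiplicity_times_same) auto
    moreover have "w (Suc m) = w (Suc k)" unfolding e by (rule w_even)
    moreover have "w (Suc k) + multiplicity 2 (Suc k) = w k + 1" using 1 k by simp
    ultimately show ?thesis using k by simp
  qed
qed

lemma I1: "Suc m * (Suc (2*m) choose m) = Suc (2*m) * (2*m choose m)"
proof -
  have "Suc (2*m) * (2*m choose m) = (Suc (2*m) choose Suc m) * Suc m" by (rule Suc_times_binomial_eq)
  moreover have "(Suc (2*m) choose Suc m) = (Suc (2*m) choose m)"
    using binomial_symmetric[of "Suc m" "Suc (2*m)"] by simp
  ultimately show ?thesis by simp
qed

lemma I2: "(Suc (Suc (2*m)) choose Suc m) = 2 * (Suc (2*m) choose m)"
proof -
  have "(Suc (2*m) choose Suc m) = (Suc (2*m) choose m)"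
    using binomial_symmetric[of "Suc m" "Suc (2*m)"] by simp
  then show ?thesis by simp
qed

lemma mC: "multiplicity 2 (2*m choose m) = w m \<and> multiplicity 2 (Suc (2*m) choose m) + multiplicity 2 (Suc m) = w m"
proof (induction m)
  case 0
  then show ?case by simp
next
  case (Suc m)
  have nz1: "(Suc (2*m) choose m) \<noteq> 0" by simp
  have nz2: "(2*m choose m) \<noteq> 0" by simp
  have a: "multiplicity 2 (Suc (2*m) choose m) + multiplicity 2 (Suc m) = w m"
  proof -
    have "multiplicity 2 (Suc m * (Suc (2*m) choose m)) = multiplicity 2 (Suc (2*m) * (2*m choose m))"
      using I1 by simp
    then show ?thesis using mult2_mult[OF _ nz1, of "Suc m"] mult2_mult[OF _ nz2, of "Suc (2*m)"] mult2_odd[of m] Suc.IH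
      by simp
  qed
  have b: "multiplicity 2 (2 * Suc m choose Suc m) = w (Suc m)"
  proof -
    have "(2 * Suc m choose Suc m) = 2 * (Suc (2*m) choose m)" using I2[of m] by simp
    moreover have "multiplicity 2 (2 * (Suc (2*m) choose m)) = Suc (multiplicity 2 (Suc (2*m) choose m))"
      by (rule multiplicity_times_same) auto
    ultimately have "multiplicity 2 (2 * Suc m choose Suc m) = Suc (multiplicity 2 (Suc (2*m) choose m))"
      by (simp only:)
    then show ?thesis using a mW[of m] by simp
  qed
  have c: "multiplicity 2 (Suc (2 * Suc m) choose Suc m) + multiplicity 2 (Suc (Suc m)) = w (Suc m)"
  proof -
    have nz3: "(Suc (2 * Suc m) choose Suc m) \<noteq> 0" by simp
    have nz4: "(2 * Suc m choose Suc m) \<noteq> 0" by simp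
    have eq: "multiplicity 2 (Suc (Suc m) * (Suc (2 * Suc m) choose Suc m)) = multiplicity 2 (Suc (2 * Suc m) * (2 * Suc m choose Suc m))"
      using I1[of "Suc m"] by (rule arg_cong)
    have m1: "multiplicity 2 (Suc (Suc m) * (Suc (2 * Suc m) choose Suc m)) = multiplicity 2 (Suc (Suc m)) + multiplicity 2 (Suc (2 * Suc m) choose Suc m)"
      by (rule mult2_mult[OF _ nz3]) simp
    have m2: "multiplicity 2 (Suc (2 * Suc m) * (2 * Suc m choose Suc m)) = multiplicity 2 (Suc (2 * Suc m)) + multiplicity 2 (2 * Suc m choose Suc m)"
      by (rule mult2_mult[OF _ nz4]) simp
    show ?thesis using eq m1 m2 mult2_odd[of "Suc m"] b by linarith
  qed
  show ?case using b c by simp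
qed

lemma w_pos: "n \<ge> 1 \<Longrightarrow> w n \<ge> 1"
proof (induction n rule: nat_less_induct)
  case (1 n)
  have e: "w n = n mod 2 + w (n div 2)" using 1(2) by (simp add: w.simps[of n])
  show ?case
  proof (cases "n mod 2 = 1")
    case True then show ?thesis using e by simp
  next
    case False
    then have h: "n div 2 \<ge> 1" "n div 2 < n" using 1(2) by auto
    then have "w (n div 2) \<ge> 1" using 1(1) by blast
    then show ?thesis using e by simp
  qed
qed

lemma mult_central: "multiplicity 2 (n choose (n div 2)) + 1 = w (Suc n)"
proof (cases "even n")
  case True then obtain m where m: "n = 2*m" by blast
  then show ?thesis using mC[of m] by simp
next
  case False then obtain m where m: "n = Suc (2*m)" using oddE by fastforce
  have "n div 2 = m" using m by simp
  moreover have "w (Suc n) = w (Suc m)" using m w_even[of "Suc m"] by (simp add: m)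
  ultimately show ?thesis using mC[of m] mW[of m] m by simp
qed



lemma ok_mono: "tree_queries_ok Q t \<Longrightarrow> (\<And>T. Q T \<Longrightarrow> Q' T) \<Longrightarrow> tree_queries_ok Q' t"
  by (induction t) auto

lemma xor_parity: "xor_query N T \<Longrightarrow> parity_query N T"
  by (auto simp: xor_query_def parity_query_def)

lemma fin_img: "finite ((num_queries t) ` {X::bool list. length X = N})"
  using finite_len by simp

lemma cost_ge: "length X = N \<Longrightarrow> num_queries t X \<le> tree_cost N t"
  unfolding tree_cost_def by (rule Max_ge[OF fin_img]) simp

lemma cost_le: "(\<And>X. length X = N \<Longrightarrow> num_queries t X \<le> c) \<Longrightarrow> tree_cost N t \<le> c"
  unfolding tree_cost_def
proof (rule Max.boundedI[OF fin_img])
  show "num_queries t ` {X::bool list. length X = N} \<noteq> {}"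
    using length_replicate[of N False] by blast
qed auto

lemma cnt_sum: "count_list x True + count_list x False = length x"
  by (induction x) auto

lemma card_cnt: "card {i\<in>{..<length x}. x!i} = count_list x True"
proof -
  have "count_list x True = card {i. i < length x \<and> True = x!i}"
    unfolding count_list_eq_length_filter length_filter_conv_card ..
  moreover have "{i\<in>{..<length x}. x!i} = {i. i < length x \<and> True = x!i}" by auto
  ultimately show ?thesis by simp
qed

lemma chi_all: "length x = N \<Longrightarrow> chi {..<N} x = (-1)^count_list x True"
  using card_cnt[of x] by (simp add: chi_def)

lemma majF: "length x = Suc n \<Longrightarrow> (\<not> MAJORITY x) = (count_list x True < Suc (n div 2))"
  using cnt_sum[of x] unfolding MAJORITY_def by auto

lemma sg_sum: "sum_list (map sg x) = int (count_list x True) - int (count_list x False)"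
  by (induction x) (auto simp: sg_def)

lemma lower:
  assumes ok: "tree_queries_ok (parity_query N) t" and comp: "computes N t MAJORITY" and N: "N \<ge> 1"
  shows "N + 1 - w N \<le> tree_cost N t"
proof -
  obtain n where n: "N = Suc n" using N by (cases N) auto
  define d where "d = tree_cost N t"
  have h: "(2::int)^(N-d) dvd (\<Sum>x\<in>{x\<in>region N []. \<not> eval_tree t x}. chi {..<N} x)"
  proof (rule tree_dvd[OF ok])
    show "\<forall>x\<in>region N []. length [] + num_queries t x \<le> d"
      using cost_ge unfolding d_def region_def by auto
  qed auto
  have se: "{x\<in>region N []. \<not> eval_tree t x} = {x. length x = Suc n \<and> count_list x True < Suc (n div 2)}"
    using comp majF n unfolding computes_def region_def by auto
  have "(\<Sum>x\<in>{x\<in>region N []. \<not> eval_tree t x}. chi {..<N} x) = G (Suc n) (Suc (n div 2))"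
    unfolding se G_def by (rule sum.cong) (auto simp: chi_all n)
  also have "\<dots> = (-1)^(n div 2) * int (n choose (n div 2))" by (rule G_closed)
  finally have "(2::int)^(N-d) dvd (-1)^(n div 2) * int (n choose (n div 2))" using h by simp
  then have "(2::int)^(N-d) dvd (-1)^(n div 2) * ((-1)^(n div 2) * int (n choose (n div 2)))"
    by (rule dvd_mult)
  moreover have "(-1::int)^(n div 2) * ((-1)^(n div 2) * int (n choose (n div 2))) = int (n choose (n div 2))"
    by (cases "even (n div 2)") auto
  ultimately have "(2::int)^(N-d) dvd int (n choose (n div 2))" by simp
  then have "(2::nat)^(N-d) dvd (n choose (n div 2))"
    by (metis of_nat_dvd_iff of_nat_numeral of_nat_power)
  then have "N - d \<le> multiplicity 2 (n choose (n div 2))"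
    by (simp add: power_dvd_iff_le_multiplicity)
  moreover have "multiplicity 2 (n choose (n div 2)) + 1 = w N" using mult_central n by simp
  moreover have "w N \<ge> 1" using w_pos N by simp
  ultimately show ?thesis unfolding d_def by linarith
qed

definition t0 :: "nat \<Rightarrow> dtree" where "t0 N = alg [0..<N] [] None"

lemma t0_ok: "tree_queries_ok (xor_query N) (t0 N)"
  unfolding t0_def by (rule alg_ok) auto

lemma t0_computes: "computes N (t0 N) MAJORITY"
  unfolding computes_def
proof (intro allI impI)
  fix X :: "bool list" assume X: "length X = N"
  have "eval_tree (t0 N) X = (0 \<le> 1 * sum_list (map (\<lambda>r. sg (X!r)) [0..<N]) + 2*1*sum_list (map (\<lambda>r. sg (X!r)) []) + 0)"
    unfolding t0_def by (rule alg_correct) auto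
  also have "map (\<lambda>r. sg (X!r)) [0..<N] = map sg X"
    by (rule nth_equalityI) (auto simp: X)
  finally show "eval_tree (t0 N) X = MAJORITY X"
    using sg_sum[of X] by (simp add: MAJORITY_def not_less)
qed

lemma t0_cost: "tree_cost N (t0 N) \<le> N + 1 - w N"
proof (rule cost_le)
  fix X :: "bool list"
  show "num_queries (t0 N) X \<le> N + 1 - w N"
    using alg_cost[of "[0..<N]" "[]" None X] unfolding t0_def by simp
qed

lemma D_eq:
  assumes N: "N \<ge> 1" and sub: "\<And>T. Q N T \<Longrightarrow> parity_query N T" and t0q: "tree_queries_ok (Q N) (t0 N)"
  shows "D Q N MAJORITY = N + 1 - w N"
proof -
  let ?P = "\<lambda>c. \<exists>t. tree_queries_ok (Q N) t \<and> computes N t MAJORITY \<and> tree_cost N t = c"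
  have p0: "?P (tree_cost N (t0 N))" using t0q t0_computes by blast
  have le: "(LEAST c. ?P c) \<le> tree_cost N (t0 N)" by (rule Least_le[where P = ?P]) (rule p0)
  have "?P (LEAST c. ?P c)" by (rule LeastI[where P = ?P]) (rule p0)
  then obtain t where t: "tree_queries_ok (Q N) t" "computes N t MAJORITY" "tree_cost N t = (LEAST c. ?P c)" by blast
  have "N + 1 - w N \<le> tree_cost N t" by (rule lower[OF ok_mono[OF t(1) sub] t(2) N])
  then show ?thesis unfolding D_def using le t(3) t0_cost[of N] by linarith
qed

theorem mainTheorem12:
  fixes N :: nat
  assumes "N \<ge> 1"
  shows "D_PARITY N MAJORITY = N + 1 - w N \<and> D_XOR N MAJORITY = N + 1 - w N"
proof
  show "D_PARITY N MAJORITY = N + 1 - w N"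
    unfolding D_PARITY_def by (rule D_eq[OF assms]) (auto intro: ok_mono[OF t0_ok] xor_parity)
  show "D_XOR N MAJORITY = N + 1 - w N"
    unfolding D_XOR_def by (rule D_eq[OF assms]) (auto intro: t0_ok xor_parity)
qed

end
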